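(* Let $G$ be a finite group of order $9$ (written additively), and let $A,B\subseteq G$. Then: (i) if $|A|=3$ and $A$ is zero-sum free, then $|\sum(A)|\ge 6$; (ii) if $|A|=3$ and $0\notin A$, then $|\sum(A)|\ge 5$; (iii) if $|A|=4$ and $0\notin A$, then $|\sum(A)|\ge 7$; (iv) if $|A|=4$, then $|\sum_2(A)|\ge 5$; (v) if $|A|=4$ and $|B|\ge 2$, then $|A+B|\ge 5$.
   Context: For a subset $A=\{a_1,\dots,a_k\}$ of $G$, $\sum(A)$ is the set of all sums $a_{i_1}+\cdots+a_{i_l}$ with $1\le l\le k$ and $i_1,\dots,i_l$ pairwise distinct; $\sum_r(A)$ is the set of all such sums with exactly $r$ pairwise distinct indices. $A$ is zero-sum free if $0\notin\sum(A)$. $A+B=\{a+b: a\in A, b\in B\}$. *)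

theory Defs
  imports Main
begin

definition subsums :: "'a::comm_monoid_add set \<Rightarrow> 'a set" where
  "subsums A = {\<Sum>S | S. S \<subseteq> A \<and> S \<noteq> {}}"

definition subsums_r :: "nat \<Rightarrow> 'a::comm_monoid_add set \<Rightarrow> 'a set" where
  "subsums_r r A = {\<Sum>S | S. S \<subseteq> A \<and> card S = r}"

definition zero_sum_free :: "'a::comm_monoid_add set \<Rightarrow> bool" where
  "zero_sum_free A \<longleftrightarrow> 0 \<notin> subsums A"

definition sumset :: "'a::plus set \<Rightarrow> 'a set \<Rightarrow> 'a set" where
  "sumset A B = {a + b | a b. a \<in> A \<and> b \<in> B}"

end

theory Submission
  imports Defs
begin

fun nt :: "nat \<Rightarrow> 'a::ab_group_add \<Rightarrow> 'a" where
  "nt 0 a = 0" | "nt (Suc n) a = a + nt n a"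

lemma nt_add: "nt (m + n) a = nt m a + nt n a"
  by (induction m) (auto simp: add.assoc)

lemma nt_zero[simp]: "nt n 0 = 0"
  by (induction n) auto

lemma nt_mult: "nt (m * n) a = nt m (nt n a)"
  by (induction m) (auto simp: nt_add)

lemma sum_const_nt: "finite S \<Longrightarrow> sum (\<lambda>_. a) S = nt (card S) a"
  by (induction S rule: finite_induct) auto

lemma transl_stab:
  fixes U :: "'a::ab_group_add set"
  assumes "finite U" "(\<lambda>x. x + d) ` U \<subseteq> U"
  shows "nt (card U) d = 0"
proof -
  have inj: "inj_on (\<lambda>x. x + d) U" by (auto simp: inj_on_def)
  have eq: "(\<lambda>x. x + d) ` U = U"
    using card_subset_eq[OF assms(1) assms(2)] card_image[OF inj] by simp
  have "sum (\<lambda>x. x) U = sum (\<lambda>x. x) ((\<lambda>x. x + d) ` U)" using eq by simp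
  also have "\<dots> = sum (\<lambda>x. x + d) U" using sum.reindex[OF inj] by simp
  also have "\<dots> = sum (\<lambda>x. x) U + nt (card U) d"
    by (simp add: sum.distrib sum_const_nt[OF assms(1)])
  finally show ?thesis by simp
qed

context
  fixes dummy :: "'a::{ab_group_add,finite}"
  assumes nine: "card (UNIV :: 'a set) = 9"
begin

lemma nt9: "nt 9 (a::'a) = 0"
  using transl_stab[of "UNIV::'a set" a] nine by simp

lemma two0: "(a::'a) + a = 0 \<Longrightarrow> a = 0"
proof -
  assume h: "a + a = 0"
  have "nt (1 + 4 * 2) a = 0" using nt9[of a] by simp
  then show ?thesis unfolding nt_add nt_mult using h by (simp add: numeral_eq_Suc)
qed

lemma four0: "nt 4 (a::'a) = 0 \<Longrightarrow> a = 0"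
proof -
  assume h: "nt 4 a = 0"
  have "nt (1 + 2 * 4) a = 0" using nt9[of a] by simp
  then show ?thesis unfolding nt_add nt_mult using h by (simp add: numeral_eq_Suc)
qed

lemma five0: "nt 5 (a::'a) = 0 \<Longrightarrow> a = 0"
proof -
  assume h: "nt 5 a = 0"
  have "nt (4 + 5) a = 0" using nt9[of a] by simp
  then have "nt 4 a = 0" unfolding nt_add using h by simp
  then show ?thesis by (rule four0)
qed

lemma seven0: "nt 7 (a::'a) = 0 \<Longrightarrow> a = 0"
proof -
  assume h: "nt 7 a = 0"
  have "nt (2 + 7) a = 0" using nt9[of a] by simp
  then have "a + a = 0" unfolding nt_add using h by (simp add: numeral_eq_Suc)
  then show ?thesis by (rule two0)
qed

lemma eight0: "nt 8 (a::'a) = 0 \<Longrightarrow> a = 0"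
proof -
  assume h: "nt 8 a = 0"
  have "nt (1 + 8) a = 0" using nt9[of a] by simp
  then show ?thesis unfolding nt_add using h by simp
qed

end

lemma subsums_empty[simp]: "subsums {} = {}"
  by (auto simp: subsums_def)

lemma subsums_insert:
  fixes A :: "'a::comm_monoid_add set"
  assumes "finite A" "x \<notin> A"
  shows "subsums (insert x A) = subsums A \<union> {x} \<union> (\<lambda>s. x + s) ` subsums A"
proof (rule set_eqI, rule iffI)
  fix y assume "y \<in> subsums (insert x A)"
  then obtain S where S: "y = \<Sum>S" "S \<subseteq> insert x A" "S \<noteq> {}" by (auto simp: subsums_def)
  show "y \<in> subsums A \<union> {x} \<union> (\<lambda>s. x + s) ` subsums A"
  proof (cases "x \<in> S")
    case True
    let ?S = "S - {x}"
    have fS: "finite S" using S(2) assms(1) finite_subset by blast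
    have y: "y = x + \<Sum>?S" using S(1) True fS by (simp add: sum.remove)
    show ?thesis
    proof (cases "?S = {}")
      case True
      hence "\<Sum>?S = 0" by (simp only: sum.empty)
      thus ?thesis using y by simp
    next
      case False
      have "\<Sum>?S \<in> subsums A" using False S(2) unfolding subsums_def by blast
      thus ?thesis using y by blast
    qed
  next
    case False
    hence "S \<subseteq> A" using S by blast
    thus ?thesis using S unfolding subsums_def by blast
  qed
next
  fix y assume "y \<in> subsums A \<union> {x} \<union> (\<lambda>s. x + s) ` subsums A"
  moreover
  { assume "y \<in> subsums A" hence "y \<in> subsums (insert x A)" unfolding subsums_def by blast }
  moreover
  { assume "y = x"
    hence "y = \<Sum>{x} \<and> {x} \<subseteq> insert x A \<and> {x} \<noteq> {}" by simp
    hence "y \<in> subsums (insert x A)" unfolding subsums_def by blast }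
  moreover
  { fix s assume s: "s \<in> subsums A" "y = x + s"
    then obtain S where S: "s = \<Sum>S" "S \<subseteq> A" "S \<noteq> {}" by (auto simp: subsums_def)
    have fS: "finite S" using S(2) assms(1) finite_subset by blast
    have "x \<notin> S" using S(2) assms(2) by blast
    hence "y = \<Sum>(insert x S) \<and> insert x S \<subseteq> insert x A \<and> insert x S \<noteq> {}" using fS S s by auto
    hence "y \<in> subsums (insert x A)" unfolding subsums_def by blast }
  ultimately show "y \<in> subsums (insert x A)" by blast
qed


lemma card5I:
  "\<lbrakk>x1\<noteq>x2; x1\<noteq>x3; x1\<noteq>x4; x1\<noteq>x5; x2\<noteq>x3; x2\<noteq>x4; x2\<noteq>x5; x3\<noteq>x4; x3\<noteq>x5; x4\<noteq>x5\<rbrakk>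
   \<Longrightarrow> card {x1,x2,x3,x4,x5} = 5"
  by simp

lemma card6I:
  "\<lbrakk>x1\<noteq>x2; x1\<noteq>x3; x1\<noteq>x4; x1\<noteq>x5; x1\<noteq>x6; x2\<noteq>x3; x2\<noteq>x4; x2\<noteq>x5; x2\<noteq>x6;
    x3\<noteq>x4; x3\<noteq>x5; x3\<noteq>x6; x4\<noteq>x5; x4\<noteq>x6; x5\<noteq>x6\<rbrakk>
   \<Longrightarrow> card {x1,x2,x3,x4,x5,x6} = 6"
  by simp

lemma card7I:
  "\<lbrakk>x1\<noteq>x2; x1\<noteq>x3; x1\<noteq>x4; x1\<noteq>x5; x1\<noteq>x6; x1\<noteq>x7; x2\<noteq>x3; x2\<noteq>x4; x2\<noteq>x5; x2\<noteq>x6; x2\<noteq>x7;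
    x3\<noteq>x4; x3\<noteq>x5; x3\<noteq>x6; x3\<noteq>x7; x4\<noteq>x5; x4\<noteq>x6; x4\<noteq>x7; x5\<noteq>x6; x5\<noteq>x7; x6\<noteq>x7\<rbrakk>
   \<Longrightarrow> card {x1,x2,x3,x4,x5,x6,x7} = 7"
  by simp

lemma card_ge_sub: "finite (B::'a::finite set) \<Longrightarrow> X \<subseteq> B \<Longrightarrow> card X = n \<Longrightarrow> card B \<ge> n"
  using card_mono by blast

lemma pc: "(p::'a::ab_group_add)+q=0 \<Longrightarrow> p+r=0 \<Longrightarrow> q=r" by (metis add_left_cancel)
lemma pc': "(p::'a::ab_group_add)+q=0 \<Longrightarrow> r+q=0 \<Longrightarrow> p=r" by (metis add_right_cancel)
lemma pairing:
  fixes a b c d :: "'a::ab_group_add"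
  assumes dis: "a \<noteq> b" "a \<noteq> c" "a \<noteq> d" "b \<noteq> c" "b \<noteq> d" "c \<noteq> d"
  and h: "a+b=0 \<or> a+c=0 \<or> b+c=0 \<or> a+b+c=0"
         "a+b=0 \<or> a+d=0 \<or> b+d=0 \<or> a+b+d=0"
         "a+c=0 \<or> a+d=0 \<or> c+d=0 \<or> a+c+d=0"
         "b+c=0 \<or> b+d=0 \<or> c+d=0 \<or> b+c+d=0"
  shows "(a+b=0 \<and> c+d=0) \<or> (a+c=0 \<and> b+d=0) \<or> (a+d=0 \<and> b+c=0)"
proof -
  have t: "a+b+c=0 \<Longrightarrow> a+b+d=0 \<Longrightarrow> False" "a+b+c=0 \<Longrightarrow> a+c+d=0 \<Longrightarrow> False"
    "a+b+c=0 \<Longrightarrow> b+c+d=0 \<Longrightarrow> False" "a+b+d=0 \<Longrightarrow> a+c+d=0 \<Longrightarrow> False"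
    "a+b+d=0 \<Longrightarrow> b+c+d=0 \<Longrightarrow> False" "a+c+d=0 \<Longrightarrow> b+c+d=0 \<Longrightarrow> False"
    using dis by (metis add_right_cancel add_left_cancel add.commute add.assoc)+
  have p: "a+b=0 \<Longrightarrow> a+c\<noteq>0" "a+b=0 \<Longrightarrow> a+d\<noteq>0" "a+c=0 \<Longrightarrow> a+d\<noteq>0"
    "a+b=0 \<Longrightarrow> b+c\<noteq>0" "a+b=0 \<Longrightarrow> b+d\<noteq>0" "b+c=0 \<Longrightarrow> b+d\<noteq>0"
    "a+c=0 \<Longrightarrow> b+c\<noteq>0" "a+c=0 \<Longrightarrow> c+d\<noteq>0" "b+c=0 \<Longrightarrow> c+d\<noteq>0"
    "a+d=0 \<Longrightarrow> b+d\<noteq>0" "a+d=0 \<Longrightarrow> c+d\<noteq>0" "b+d=0 \<Longrightarrow> c+d\<noteq>0"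
    using dis pc pc' add.commute by metis+
  show ?thesis using h t p by blast
qed

lemma subsums_mem: "T \<subseteq> A \<Longrightarrow> T \<noteq> {} \<Longrightarrow> \<Sum>T \<in> subsums A"
  unfolding subsums_def by blast

lemma set1card:
  fixes x y :: "'a::ab_group_add"
  assumes x0: "x \<noteq> 0" and y0: "y \<noteq> 0" and xy: "y \<noteq> x" "y \<noteq> -x"
    and xx: "x + x \<noteq> 0" and yy: "y + y \<noteq> 0" and ss: "(x+y)+(x+y) \<noteq> 0"
    and c: "x + x + y \<noteq> 0" "x + y + y \<noteq> 0"
  shows "card {0,x,-x,y,-y,x+y,-x + -y} = 7"
proof (rule card7I)
  show "0 \<noteq> x" "0 \<noteq> -x" "0 \<noteq> y" "0 \<noteq> -y" using x0 y0 by auto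
  show "0 \<noteq> x + y" using xy(2) by (metis add_eq_0_iff)
  show "0 \<noteq> -x + -y" using xy(2) by (metis add_eq_0_iff minus_add minus_equation_iff neg_0_equal_iff_equal add.commute)
  show "x \<noteq> -x" using xx by (metis eq_neg_iff_add_eq_0)
  show "x \<noteq> y" "-x \<noteq> y" using xy by auto
  show "x \<noteq> -y" using xy by (metis minus_minus)
  show "-x \<noteq> -y" using xy by auto
  show "x \<noteq> x + y" "-x \<noteq> -x + -y" "y \<noteq> x + y" "-y \<noteq> -x + -y" using x0 y0 by auto
  show "y \<noteq> -y" using yy by (metis eq_neg_iff_add_eq_0)
  show "x \<noteq> -x + -y"
  proof assume "x = -x + -y" hence "x + x + y = 0" by (simp add: algebra_simps) thus False using c by simp qed
  show "-x \<noteq> x + y"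
  proof assume "-x = x + y" hence "x + x + y = 0" by (metis add.assoc right_minus) thus False using c by simp qed
  show "y \<noteq> -x + -y"
  proof assume "y = -x + -y" hence "x + y + y = 0" by (simp add: algebra_simps) thus False using c by simp qed
  show "-y \<noteq> x + y"
  proof assume "-y = x + y" hence "x + y + y = 0" by (metis left_minus) thus False using c by simp qed
  show "x + y \<noteq> -x + -y"
  proof assume "x + y = -x + -y" hence "(x+y)+(x+y) = 0" by (simp add: algebra_simps) thus False using ss by simp qed
qed

lemma subsums3:
  assumes "a \<noteq> b" "a \<noteq> c" "b \<noteq> c"
  shows "subsums {a,b,c} = {a,b,c,a+b,a+c,b+c,a+b+c}"
  using assms by (auto simp: subsums_insert add.assoc)

context
  fixes dummy :: "'a::{ab_group_add,finite}"
  assumes nine: "card (UNIV :: 'a set) = 9"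
begin

lemma t1: "(x::'a) = y + z \<Longrightarrow> y = x + z \<Longrightarrow> z = 0"
proof -
  assume h: "x = y + z" "y = x + z"
  hence "y = y + (z + z)" by (metis add.assoc)
  hence "z + z = 0" by simp
  thus ?thesis using two0[OF nine] by blast
qed

lemma part1:
  assumes "card (A::'a set) = 3" "zero_sum_free A"
  shows "card (subsums A) \<ge> 6"
proof -
  obtain a b c where A: "A = {a,b,c}" "a \<noteq> b" "b \<noteq> c" "a \<noteq> c"
    using assms(1) card_3_iff by metis
  have ss: "subsums A = {a,b,c,a+b,a+c,b+c,a+b+c}" using A subsums3 by simp
  have z: "a \<noteq> 0" "b \<noteq> 0" "c \<noteq> 0" "a+b \<noteq> 0" "a+c \<noteq> 0" "b+c \<noteq> 0" "a+b+c \<noteq> 0"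
    using assms(2) unfolding zero_sum_free_def ss by auto
  have z2: "a+(b+c) \<noteq> 0" using z by (simp add: add.assoc[symmetric])
  have e: "\<not> (a = b + c \<and> b = a + c)" "\<not> (a = b + c \<and> c = a + b)" "\<not> (b = a + c \<and> c = a + b)"
    using t1[of a b c] t1[of a c b] t1[of b c a] z by (auto simp: add.commute)
  have ne: "a \<noteq> a+b" "a \<noteq> a+c" "a \<noteq> a+b+c" "b \<noteq> a+b" "b \<noteq> b+c" "b \<noteq> a+b+c"
      "c \<noteq> a+c" "c \<noteq> b+c" "c \<noteq> a+b+c" "a+b \<noteq> a+c" "a+b \<noteq> b+c" "a+b \<noteq> a+b+c"
      "a+c \<noteq> b+c" "a+c \<noteq> a+b+c" "b+c \<noteq> a+b+c"
    using z A by (simp_all add: add.assoc add.left_commute)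
  show ?thesis
  proof (cases "c = a + b")
    case True
    have x: "a \<noteq> b+c" "b \<noteq> a+c" using e True by auto
    have "card {a,b,c,a+c,b+c,a+b+c} = 6" by (rule card6I) (use A ne x in auto)
    moreover have "{a,b,c,a+c,b+c,a+b+c} \<subseteq> subsums A" unfolding ss by blast
    ultimately show ?thesis by (intro card_ge_sub) auto
  next
    case F1: False
    show ?thesis
    proof (cases "b = a + c")
      case True
      have x: "a \<noteq> b+c" "c \<noteq> a+b" using e True F1 by auto
      have "card {a,b,c,a+b,b+c,a+b+c} = 6" by (rule card6I) (use A ne x in auto)
      moreover have "{a,b,c,a+b,b+c,a+b+c} \<subseteq> subsums A" unfolding ss by blast
      ultimately show ?thesis by (intro card_ge_sub) auto
    next
      case False
      have x: "b \<noteq> a+c" "c \<noteq> a+b" using False F1 by auto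
      have "card {a,b,c,a+b,a+c,a+b+c} = 6" by (rule card6I) (use A ne x in auto)
      moreover have "{a,b,c,a+b,a+c,a+b+c} \<subseteq> subsums A" unfolding ss by blast
      ultimately show ?thesis by (intro card_ge_sub) auto
    qed
  qed
qed


lemma part2:
  assumes "card (A::'a set) = 3" "0 \<notin> A"
  shows "card (subsums A) \<ge> 5"
proof -
  obtain a b c where A: "A = {a,b,c}" "a \<noteq> b" "b \<noteq> c" "a \<noteq> c"
    using assms(1) card_3_iff by metis
  have ss: "subsums A = {a,b,c,a+b,a+c,b+c,a+b+c}" using A subsums3 by simp
  have z: "a \<noteq> 0" "b \<noteq> 0" "c \<noteq> 0" using assms(2) A by auto
  have e: "\<not> (a = b + c \<and> b = a + c)" "\<not> (a = b + c \<and> c = a + b)" "\<not> (b = a + c \<and> c = a + b)"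
    using t1[of a b c] t1[of a c b] t1[of b c a] z by (auto simp: add.commute)
  have ne: "a \<noteq> a+b" "a \<noteq> a+c" "b \<noteq> a+b" "b \<noteq> b+c"
      "c \<noteq> a+c" "c \<noteq> b+c" "a+b \<noteq> a+c" "a+b \<noteq> b+c"
      "a+c \<noteq> b+c"
    using z A by (simp_all add: add.assoc add.left_commute)
  show ?thesis
  proof (cases "c = a + b")
    case True
    have x: "a \<noteq> b+c" "b \<noteq> a+c" using e True by auto
    have "card {a,b,c,a+c,b+c} = 5" by (rule card5I) (use A ne x in auto)
    moreover have "{a,b,c,a+c,b+c} \<subseteq> subsums A" unfolding ss by blast
    ultimately show ?thesis by (intro card_ge_sub) auto
  next
    case F1: False
    show ?thesis
    proof (cases "b = a + c")
      case True
      have x: "a \<noteq> b+c" "c \<noteq> a+b" using e True F1 by auto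
      have "card {a,b,c,a+b,b+c} = 5" by (rule card5I) (use A ne x in auto)
      moreover have "{a,b,c,a+b,b+c} \<subseteq> subsums A" unfolding ss by blast
      ultimately show ?thesis by (intro card_ge_sub) auto
    next
      case False
      have x: "b \<noteq> a+c" "c \<noteq> a+b" using False F1 by auto
      have "card {a,b,c,a+b,a+c} = 5" by (rule card5I) (use A ne x in auto)
      moreover have "{a,b,c,a+b,a+c} \<subseteq> subsums A" unfolding ss by blast
      ultimately show ?thesis by (intro card_ge_sub) auto
    qed
  qed
qed

lemma t2: "(a::'a) + b = c + d \<Longrightarrow> a + c = b + d \<Longrightarrow> b = c"
proof -
  assume h: "a + b = c + d" "a + c = b + d"
  have "(b - c) + (b - c) = ((a+b) - (c+d)) + ((b+d) - (a+c))" by (simp add: algebra_simps)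
  also have "\<dots> = 0" using h by simp
  finally show ?thesis using two0[OF nine] by (metis eq_iff_diff_eq_0)
qed

lemma part4:
  assumes "card (A::'a set) = 4"
  shows "card (subsums_r 2 A) \<ge> 5"
proof -
  obtain a B where aB: "A = insert a B" "a \<notin> B" "card B = 3"
    using assms card_Suc_eq[of A 3] by auto
  obtain b c d where B: "B = {b,c,d}" "b \<noteq> c" "c \<noteq> d" "b \<noteq> d"
    using aB(3) card_3_iff by metis
  have A: "A = {a,b,c,d}" "a \<noteq> b" "a \<noteq> c" "a \<noteq> d" using aB B by auto
  have mem: "x + y \<in> subsums_r 2 A" if "x \<in> A" "y \<in> A" "x \<noteq> y" for x y
  proof -
    have "x + y = \<Sum>{x,y} \<and> {x,y} \<subseteq> A \<and> card {x,y} = 2" using that by simp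
    thus ?thesis unfolding subsums_r_def by blast
  qed
  have ne: "a+b \<noteq> a+c" "a+b \<noteq> a+d" "a+b \<noteq> b+c" "a+b \<noteq> b+d"
    "a+c \<noteq> a+d" "a+c \<noteq> b+c" "a+c \<noteq> c+d" "a+d \<noteq> b+d" "a+d \<noteq> c+d"
    "b+c \<noteq> b+d" "b+c \<noteq> c+d" "b+d \<noteq> c+d" "a+b \<noteq> c+b" "a+c \<noteq> d+c" "b+d \<noteq> a+b"
    "a+d \<noteq> a+b" "b+c \<noteq> a+c" "c+d \<noteq> a+c" "b+d \<noteq> a+d" "c+d \<noteq> a+d" "c+d \<noteq> b+c" "c+d \<noteq> b+d"
    using A B by (simp_all add: add.commute)
  have fin: "finite (subsums_r 2 A)" by simp
  show ?thesis
  proof (cases "a + c = b + d")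
    case True
    have x: "a+b \<noteq> c+d" "a+d \<noteq> b+c"
      using True t2[of a b c d] t2[of a c d b] B A by (auto simp: add.commute)
    have "card {a+b,a+c,a+d,b+c,c+d} = 5" by (rule card5I) (use ne x in auto)
    moreover have "{a+b,a+c,a+d,b+c,c+d} \<subseteq> subsums_r 2 A" using mem A B by auto
    ultimately show ?thesis using fin by (intro card_ge_sub) auto
  next
    case F: False
    show ?thesis
    proof (cases "a + d = b + c")
      case True
      have x: "a+b \<noteq> c+d"
        using True t2[of a b d c] B A by (auto simp: add.commute)
      have "card {a+b,a+c,a+d,b+d,c+d} = 5" by (rule card5I) (use ne x F in auto)
      moreover have "{a+b,a+c,a+d,b+d,c+d} \<subseteq> subsums_r 2 A" using mem A B by auto
      ultimately show ?thesis using fin by (intro card_ge_sub) auto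
    next
      case False
      have "card {a+b,a+c,a+d,b+c,b+d} = 5" by (rule card5I) (use ne F False in auto)
      moreover have "{a+b,a+c,a+d,b+c,b+d} \<subseteq> subsums_r 2 A" using mem A B by auto
      ultimately show ?thesis using fin by (intro card_ge_sub) auto
    qed
  qed
qed

lemma part5:
  assumes "card (A::'a set) = 4" "card (B::'a set) \<ge> 2"
  shows "card (sumset A B) \<ge> 5"
proof (rule ccontr)
  assume "\<not> ?thesis"
  hence le: "card (sumset A B) \<le> 4" by simp
  obtain b1 b2 where b: "b1 \<in> B" "b2 \<in> B" "b1 \<noteq> b2"
  proof -
    have "\<exists>b1\<in>B. \<exists>b2\<in>B. b1 \<noteq> b2"
    proof (rule ccontr)
      assume "\<not> ?thesis"
      hence "B \<subseteq> {SOME x. x \<in> B}" by (metis singletonI some_eq_imp subsetI)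
      hence "card B \<le> 1" using card_mono[of "{SOME x. x \<in> B}" B] by simp
      thus False using assms(2) by simp
    qed
    thus ?thesis using that by blast
  qed
  have sub: "(\<lambda>x. x + bi) ` A \<subseteq> sumset A B" if "bi \<in> B" for bi
    using that unfolding sumset_def by blast
  have cd: "card ((\<lambda>x. x + bi) ` A) = 4" for bi
    using assms(1) by (subst card_image) (auto simp: inj_on_def)
  have eq: "(\<lambda>x. x + bi) ` A = sumset A B" if "bi \<in> B" for bi
    using card_subset_eq[OF _ sub[OF that]] cd le card_mono[OF _ sub[OF that]]
    by (metis finite le_antisym)
  have "(\<lambda>x. x + (b2 - b1)) ` A \<subseteq> A"
  proof
    fix y assume "y \<in> (\<lambda>x. x + (b2 - b1)) ` A"
    then obtain x where x: "x \<in> A" "y = x + (b2 - b1)" by auto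
    have "x + b2 \<in> (\<lambda>x. x + b1) ` A" using eq[OF b(1)] eq[OF b(2)] x(1) by blast
    then obtain z where "z \<in> A" "x + b2 = z + b1" by auto
    moreover have "y = x + b2 - b1" using x(2) by (simp add: algebra_simps)
    ultimately show "y \<in> A" by simp
  qed
  hence "nt 4 (b2 - b1) = 0" using transl_stab[of A "b2 - b1"] assms(1) by simp
  hence "b2 - b1 = 0" using four0[OF nine] by blast
  thus False using b by simp
qed


lemma neI: "(p::'a) - q \<noteq> 0 \<Longrightarrow> p \<noteq> q" by simp

lemma caseB:
  assumes x0: "x \<noteq> 0" and y0: "y \<noteq> 0" and xy: "y \<noteq> x" "y \<noteq> -x"
  shows "card (subsums {x,-x,y,-y::'a}) \<ge> 7"
proof -
  let ?A = "{x,-x,y,-y}"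
  have xx: "x + x \<noteq> 0" using two0[OF nine] x0 by blast
  have yy: "y + y \<noteq> 0" using two0[OF nine] y0 by blast
  have nx: "x \<noteq> -x" using xx eq_neg_iff_add_eq_0[of x x] by auto
  have ny: "y \<noteq> -y" using yy eq_neg_iff_add_eq_0[of y y] by auto
  have s: "x + y \<noteq> 0" using xy neg_eq_iff_add_eq_0[of x y] by auto
  have ss: "(x+y) + (x+y) \<noteq> 0" using two0[OF nine] s by blast
  have xmy: "x \<noteq> -y" using xy by (metis minus_minus)
  have d: "x + -y \<noteq> 0" using xy by (metis add_eq_0_iff minus_minus)
  have dd: "(x + -y) + (x + -y) \<noteq> 0" using two0[OF nine] d by blast
  have fin: "finite (subsums ?A)" by simp
  have m1: "\<Sum>{x,-x} \<in> subsums ?A" "\<Sum>{x} \<in> subsums ?A" "\<Sum>{-x} \<in> subsums ?A"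
    "\<Sum>{y} \<in> subsums ?A" "\<Sum>{-y} \<in> subsums ?A" "\<Sum>{x,y} \<in> subsums ?A"
    "\<Sum>{-x,-y} \<in> subsums ?A" "\<Sum>{x,-y} \<in> subsums ?A" "\<Sum>{-x,y} \<in> subsums ?A"
    by (rule subsums_mem; blast)+
  have m: "0 \<in> subsums ?A" "x \<in> subsums ?A" "-x \<in> subsums ?A" "y \<in> subsums ?A" "-y \<in> subsums ?A"
    "x + y \<in> subsums ?A" "-x + -y \<in> subsums ?A" "x + -y \<in> subsums ?A" "-x + y \<in> subsums ?A"
    using m1 nx xy xmy by (simp_all del: add_uminus_conv_diff)
  have n4: "nt 4 z = z + z + (z + z)" for z :: 'a by (simp add: numeral_eq_Suc add.assoc)
  have n5: "nt 5 z = z + (z + z) + (z + z)" for z :: 'a by (simp add: numeral_eq_Suc add.assoc)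
  show ?thesis
  proof (cases "x + x + y \<noteq> 0 \<and> x + y + y \<noteq> 0")
    case True
    have "card {0,x,-x,y,-y,x+y,-x + -y} = 7"
      using set1card[OF x0 y0 xy xx yy ss] True by blast
    moreover have "{0,x,-x,y,-y,x+y,-x + -y} \<subseteq> subsums ?A" using m by blast
    ultimately show ?thesis using fin by (intro card_ge_sub) auto
  next
    case False
    have c2: "x + x \<noteq> y" "y + y \<noteq> x"
    proof -
      { assume a: "y = x + x" "x + x + y = 0"
        hence "nt 4 x = 0" using n4[of x] by simp
        hence False using four0[OF nine] x0 by blast }
      moreover
      { assume a: "y = x + x" "x + y + y = 0"
        hence "nt 5 x = 0" using n5[of x] by (simp add: add.assoc)
        hence False using five0[OF nine] x0 by blast }
      moreover
      { assume a: "x = y + y" "x + x + y = 0"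
        hence "nt 5 y = 0" using n5[of y] by (simp add: add.assoc)
        hence False using five0[OF nine] y0 by blast }
      moreover
      { assume a: "x = y + y" "x + y + y = 0"
        hence "nt 4 y = 0" using n4[of y] by (simp add: add.assoc)
        hence False using four0[OF nine] y0 by blast }
      ultimately show "x + x \<noteq> y" "y + y \<noteq> x" using False by blast+
    qed
    have h1: "-y \<noteq> 0" "-y \<noteq> x" "-y \<noteq> -x" using y0 xy xmy by auto
    have h2: "-y + -y \<noteq> 0" using yy by (metis minus_add minus_equation_iff neg_0_equal_iff_equal)
    have h3: "x + x + -y \<noteq> 0" "x + -y + -y \<noteq> 0"
    proof -
      show "x + x + -y \<noteq> 0" using c2(1) by (metis add_eq_0_iff2 minus_minus add.commute)
      show "x + -y + -y \<noteq> 0"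
      proof
        assume "x + -y + -y = 0"
        hence "x = y + y" by (metis add.assoc add_eq_0_iff2 minus_add_distrib minus_minus add.commute)
        thus False using c2(2) by simp
      qed
    qed
    have "card {0,x,-x,-y,-(-y),x + -y,-x + -(-y)} = 7"
      using set1card[OF x0 h1 xx h2 dd h3] .
    hence "card {0,x,-x,-y,y,x + -y,-x + y} = 7" by (simp only: minus_minus)
    moreover have "{0,x,-x,-y,y,x + -y,-x + y} \<subseteq> subsums ?A" using m by blast
    ultimately show ?thesis using fin by (intro card_ge_sub) auto
  qed
qed

lemma caseA:
  assumes "card (A'::'a set) = 3" "zero_sum_free A'" "d \<notin> A'" "d \<noteq> 0"
  shows "card (subsums (insert d A')) \<ge> 7"
proof -
  let ?S = "subsums A'"
  let ?U = "insert 0 ?S"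
  let ?V = "?U \<union> (\<lambda>x. x + d) ` ?U"
  have finA: "finite A'" by simp
  have S6: "card ?S \<ge> 6" using part1 assms(1,2) by blast
  have z: "0 \<notin> ?S" using assms(2) unfolding zero_sum_free_def .
  have U7: "card ?U \<ge> 7" using S6 z by simp
  have ss: "subsums (insert d A') = ?S \<union> {d} \<union> (\<lambda>s. d + s) ` ?S"
    using subsums_insert[OF finA assms(3)] .
  have Vsub: "?V \<subseteq> insert 0 (subsums (insert d A'))"
    unfolding ss by (auto simp: add.commute)
  have V8: "card ?V \<ge> 8"
  proof (cases "(\<lambda>x. x + d) ` ?U \<subseteq> ?U")
    case True
    hence nt: "nt (card ?U) d = 0" using transl_stab[of ?U d] by simp
    have "card ?U \<le> 9" using card_mono[of "UNIV::'a set" ?U] nine by simp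
    hence "card ?U = 7 \<or> card ?U = 8 \<or> card ?U = 9" using U7 by linarith
    moreover have "card ?U \<le> card ?V" by (rule card_mono) auto
    moreover have "card ?U \<noteq> 7"
    proof
      assume "card ?U = 7" thus False using nt seven0[OF nine, of d] assms(4) by simp
    qed
    moreover have "card ?U \<noteq> 8"
    proof
      assume "card ?U = 8" thus False using nt eight0[OF nine, of d] assms(4) by simp
    qed
    ultimately show ?thesis by linarith
  next
    case False
    hence "?U \<subset> ?V" by blast
    hence "card ?U < card ?V" by (rule psubset_card_mono[rotated]) simp
    thus ?thesis using U7 by simp
  qed
  have "card ?V \<le> card (insert 0 (subsums (insert d A')))" using Vsub by (rule card_mono[rotated]) simp
  also have "\<dots> \<le> Suc (card (subsums (insert d A')))" by (simp add: card_insert_if)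
  finally show ?thesis using V8 by simp
qed

lemma nzsf3:
  assumes "a \<noteq> b" "a \<noteq> c" "b \<noteq> c" "a \<noteq> 0" "b \<noteq> 0" "c \<noteq> 0" "\<not> zero_sum_free {a,b,c::'a}"
  shows "a+b=0 \<or> a+c=0 \<or> b+c=0 \<or> a+b+c=0"
  using assms subsums3[of a b c] unfolding zero_sum_free_def by auto

lemma part3:
  assumes "card (A::'a set) = 4" "0 \<notin> A"
  shows "card (subsums A) \<ge> 7"
proof -
  obtain a B where aB: "A = insert a B" "a \<notin> B" "card B = 3"
    using assms card_Suc_eq[of A 3] by auto
  obtain b c d where B: "B = {b,c,d}" "b \<noteq> c" "c \<noteq> d" "b \<noteq> d"
    using aB(3) card_3_iff by metis
  have A: "A = {a,b,c,d}" "a \<noteq> b" "a \<noteq> c" "a \<noteq> d" using aB B by auto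
  have z: "a \<noteq> 0" "b \<noteq> 0" "c \<noteq> 0" "d \<noteq> 0" using assms(2) A by auto
  show ?thesis
  proof (cases "zero_sum_free {a,b,c}")
    case True
    have "A = insert d {a,b,c}" using A by auto
    thus ?thesis using caseA[of "{a,b,c}" d] True A B z by simp
  next
    case n1: False
    show ?thesis
    proof (cases "zero_sum_free {a,b,d}")
      case True
      have "A = insert c {a,b,d}" using A by auto
      thus ?thesis using caseA[of "{a,b,d}" c] True A B z by simp
    next
      case n2: False
      show ?thesis
      proof (cases "zero_sum_free {a,c,d}")
        case True
        have "A = insert b {a,c,d}" using A by auto
        thus ?thesis using caseA[of "{a,c,d}" b] True A B z by simp
      next
        case n3: False
        show ?thesis
        proof (cases "zero_sum_free {b,c,d}")
          case True
          have "A = insert a {b,c,d}" using A by auto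
          thus ?thesis using caseA[of "{b,c,d}" a] True A B z by simp
        next
          case n4: False
          have h: "a+b=0 \<or> a+c=0 \<or> b+c=0 \<or> a+b+c=0"
                  "a+b=0 \<or> a+d=0 \<or> b+d=0 \<or> a+b+d=0"
                  "a+c=0 \<or> a+d=0 \<or> c+d=0 \<or> a+c+d=0"
                  "b+c=0 \<or> b+d=0 \<or> c+d=0 \<or> b+c+d=0"
            using nzsf3[OF _ _ _ _ _ _ n1] nzsf3[OF _ _ _ _ _ _ n2]
              nzsf3[OF _ _ _ _ _ _ n3] nzsf3[OF _ _ _ _ _ _ n4] A B z by auto
          have "(a+b=0 \<and> c+d=0) \<or> (a+c=0 \<and> b+d=0) \<or> (a+d=0 \<and> b+c=0)"
            using pairing[OF _ _ _ _ _ _ h] A B by auto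
          thus ?thesis
          proof (elim disjE conjE)
            assume "a+b=0" "c+d=0"
            hence e: "b = -a" "d = -c" by (simp_all add: add_eq_0_iff)
            have "A = {a,-a,c,-c}" using A e by auto
            thus ?thesis using caseB[of a c] z A B e by auto
          next
            assume "a+c=0" "b+d=0"
            hence e: "c = -a" "d = -b" by (simp_all add: add_eq_0_iff)
            have "A = {a,-a,b,-b}" using A e by auto
            thus ?thesis using caseB[of a b] z A B e by auto
          next
            assume "a+d=0" "b+c=0"
            hence e: "d = -a" "c = -b" by (simp_all add: add_eq_0_iff)
            have "A = {a,-a,b,-b}" using A e by auto
            thus ?thesis using caseB[of a b] z A B e by auto
          qed
        qed
      qed
    qed
  qed
qed

end

theorem lemma2p5:
  fixes A B :: "'a::{ab_group_add, finite} set"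
  assumes "card (UNIV :: 'a set) = 9"
  shows "(card A = 3 \<and> zero_sum_free A \<longrightarrow> card (subsums A) \<ge> 6)
    \<and> (card A = 3 \<and> 0 \<notin> A \<longrightarrow> card (subsums A) \<ge> 5)
    \<and> (card A = 4 \<and> 0 \<notin> A \<longrightarrow> card (subsums A) \<ge> 7)
    \<and> (card A = 4 \<longrightarrow> card (subsums_r 2 A) \<ge> 5)
    \<and> (card A = 4 \<and> card B \<ge> 2 \<longrightarrow> card (sumset A B) \<ge> 5)"
  using part1[OF assms] part2[OF assms] part3[OF assms] part4[OF assms] part5[OF assms] by blast

end
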